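(* Let $A=(a_1\ a_2\ a_3)$ with positive integers $a_1<a_2<a_3$ be such that the toric ideal $I_A$ is not a complete intersection. Let $M=\{g_1=(-c_1,v_{12},v_{13}),\ g_2=(v_{21},-c_2,v_{23}),\ g_3=(v_{31},v_{32},-c_3)\}$ be a minimal Markov basis for $A$, where all $c_i$ and $v_{ij}$ are positive integers. Then the following are equivalent: (1) $M$ is distance reducing; (2) $M$ reduces the distance of the circuit $z=\gamma(0,a_3,-a_2)$ where $\gamma=1/\gcd(a_2,a_3)$; (3) at least one of $v_{21}<c_2+v_{23}$ or $v_{31}<v_{32}+c_3$ holds.
   Context: For $z\in\mathbb Z^n$, $z^+,z^-\in\mathbb N^n$ denote the unique vectors with disjoint supports and $z=z^+-z^-$; $\|\cdot\|$ is the $1$-norm. The toric ideal is $I_A=\langle x^{u^+}-x^{u^-}:u\in\ker(A)\rangle$; it is a complete intersection if it is generated by $\dim\ker(A)$ elements. A Markov basis is a set $B\subseteq\ker(A)$ whose binomials $x^{u^+}-x^{u^-}$ generate $I_A$; minimal means no proper subset is a Markov basis. For nonzero $z\in\ker(A)$, $u\in\ker(A)$ reduces the distance of $z$ if there exist $(p,q)\in\{(z^+,z^-),(z^-,z^+)\}$ and $\varepsilon\in\{\pm1\}$ with $p+\varepsilon u\in\mathbb N^n$ and $\|p+\varepsilon u-q\|<\|z\|$. $B$ reduces the distance of $Z$ if each nonzero $z\in Z$ has its distance reduced by some element of $B$; $B$ is distance reducing if it reduces the distance of $\ker(A)$. *)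

theory Defs
  imports Main "HOL-Library.Poly_Mapping"
begin

text \<open>Integer vectors in Z^n are functions nat => int, supported on {..<n}.
  Polynomials in k[x_0,...,x_{n-1}] are ((nat =>0 nat) =>0 'k).\<close>

type_synonym 'k mpoly = "(nat \<Rightarrow>\<^sub>0 nat) \<Rightarrow>\<^sub>0 'k"

definition vec3 :: "int \<Rightarrow> int \<Rightarrow> int \<Rightarrow> nat \<Rightarrow> int" where
  "vec3 x y z = (\<lambda>i. if i = 0 then x else if i = 1 then y else if i = 2 then z else 0)"

definition kerA :: "(nat \<Rightarrow> int) \<Rightarrow> nat \<Rightarrow> (nat \<Rightarrow> int) set" where
  "kerA a n = {u. (\<forall>i\<ge>n. u i = 0) \<and> (\<Sum>i<n. a i * u i) = 0}"

definition pos_part :: "(nat \<Rightarrow> int) \<Rightarrow> nat \<Rightarrow> nat" where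
  "pos_part z = (\<lambda>i. nat (z i))"

definition neg_part :: "(nat \<Rightarrow> int) \<Rightarrow> nat \<Rightarrow> nat" where
  "neg_part z = (\<lambda>i. nat (- z i))"

definition norm1 :: "nat \<Rightarrow> (nat \<Rightarrow> int) \<Rightarrow> int" where
  "norm1 n z = (\<Sum>i<n. \<bar>z i\<bar>)"

definition monom :: "'k itself \<Rightarrow> nat \<Rightarrow> (nat \<Rightarrow> nat) \<Rightarrow> 'k::comm_ring_1 mpoly" where
  "monom _ n u = Poly_Mapping.single (\<Sum>i<n. Poly_Mapping.single i (u i)) 1"

definition binom :: "'k itself \<Rightarrow> nat \<Rightarrow> (nat \<Rightarrow> int) \<Rightarrow> 'k::comm_ring_1 mpoly" where
  "binom K n u = monom K n (pos_part u) - monom K n (neg_part u)"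

definition ideal_gen :: "'a::comm_ring_1 set \<Rightarrow> 'a set" where
  "ideal_gen G = {(\<Sum>g\<in>F. r g * g) | F r. finite F \<and> F \<subseteq> G}"

definition toric_ideal :: "'k itself \<Rightarrow> (nat \<Rightarrow> int) \<Rightarrow> nat \<Rightarrow> 'k::field mpoly set" where
  "toric_ideal K a n = ideal_gen (binom K n ` kerA a n)"

text \<open>Complete intersection: generated by dim ker(A) elements. For a nonzero 1 x n
  matrix, dim ker(A) = n - 1.\<close>
definition complete_intersection_row :: "'k::field itself \<Rightarrow> (nat \<Rightarrow> int) \<Rightarrow> nat \<Rightarrow> bool" where
  "complete_intersection_row K a n \<longleftrightarrow>
     (\<exists>G. finite G \<and> card G \<le> n - 1 \<and> ideal_gen G = toric_ideal K a n)"

definition markov_basis :: "'k::field itself \<Rightarrow> (nat \<Rightarrow> int) \<Rightarrow> nat \<Rightarrow> (nat \<Rightarrow> int) set \<Rightarrow> bool" where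
  "markov_basis K a n B \<longleftrightarrow> B \<subseteq> kerA a n \<and> ideal_gen (binom K n ` B) = toric_ideal K a n"

definition minimal_markov_basis :: "'k::field itself \<Rightarrow> (nat \<Rightarrow> int) \<Rightarrow> nat \<Rightarrow> (nat \<Rightarrow> int) set \<Rightarrow> bool" where
  "minimal_markov_basis K a n B \<longleftrightarrow>
     markov_basis K a n B \<and> (\<forall>B'. B' \<subset> B \<longrightarrow> \<not> markov_basis K a n B')"

definition reduces_dist :: "nat \<Rightarrow> (nat \<Rightarrow> int) \<Rightarrow> (nat \<Rightarrow> int) \<Rightarrow> bool" where
  "reduces_dist n u z \<longleftrightarrow>
     (\<exists>(p, q) \<in> {(pos_part z, neg_part z), (neg_part z, pos_part z)}.
        \<exists>\<epsilon> \<in> {1, -1::int}.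
          (\<forall>i<n. 0 \<le> int (p i) + \<epsilon> * u i) \<and>
          (\<Sum>i<n. \<bar>int (p i) + \<epsilon> * u i - int (q i)\<bar>) < norm1 n z)"

definition reduces_dist_set :: "nat \<Rightarrow> (nat \<Rightarrow> int) set \<Rightarrow> (nat \<Rightarrow> int) set \<Rightarrow> bool" where
  "reduces_dist_set n B Z \<longleftrightarrow> (\<forall>z\<in>Z. z \<noteq> (\<lambda>_. 0) \<longrightarrow> (\<exists>u\<in>B. reduces_dist n u z))"

definition distance_reducing :: "(nat \<Rightarrow> int) \<Rightarrow> nat \<Rightarrow> (nat \<Rightarrow> int) set \<Rightarrow> bool" where
  "distance_reducing a n B \<longleftrightarrow> reduces_dist_set n B (kerA a n)"

end

theory Submission
  imports Defs
begin


definition mon3 :: "(nat \<Rightarrow> nat) \<Rightarrow> (nat \<Rightarrow>\<^sub>0 nat)" where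
  "mon3 u = (\<Sum>i<3. Poly_Mapping.single i (u i))"

lemma lookup_mon3: "Poly_Mapping.lookup (mon3 u) j = (if j < 3 then u j else 0)"
  by (auto simp: mon3_def lookup_sum lookup_single when_def)

lemma keys_ideal_gen:
  fixes G :: "('k::comm_ring_1) mpoly set"
  assumes up: "\<And>m m'. D m \<Longrightarrow> D (m + m')"
    and G: "\<And>g m. g \<in> G \<Longrightarrow> m \<in> Poly_Mapping.keys g \<Longrightarrow> D m"
    and f: "f \<in> ideal_gen G" and m: "m \<in> Poly_Mapping.keys f"
  shows "D m"
proof -
  obtain F r where fF: "f = (\<Sum>g\<in>F. r g * g)" and fin: "finite F" and sub: "F \<subseteq> G"
    using f unfolding ideal_gen_def by blast
  have "\<forall>m\<in>Poly_Mapping.keys (\<Sum>g\<in>F. r g * g). D m" using fin sub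
  proof (induction F rule: finite_induct)
    case empty then show ?case by simp
  next
    case (insert x F)
    have "\<forall>m\<in>Poly_Mapping.keys (r x * x). D m"
    proof
      fix m assume "m \<in> Poly_Mapping.keys (r x * x)"
      then obtain a b where "m = a + b" "b \<in> Poly_Mapping.keys x" using keys_mult by blast
      then show "D m" using G insert.prems up by (metis add.commute insert_subset)
    qed
    then show ?case using insert keys_add[of "r x * x" "\<Sum>g\<in>F. r g * g"] by auto
  qed
  then show ?thesis using m fF by simp
qed



definition dom6 :: "int \<Rightarrow> int \<Rightarrow> int \<Rightarrow> int \<Rightarrow> int \<Rightarrow> int \<Rightarrow> int \<Rightarrow> int \<Rightarrow> int \<Rightarrow> int \<Rightarrow> int \<Rightarrow> int \<Rightarrow> bool" where
  "dom6 c1 c2 c3 v12 v13 v21 v23 v31 v32 h0 h1 h2 \<longleftrightarrow>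
     (v12 \<le> h1 \<and> v13 \<le> h2) \<or> c1 \<le> h0 \<or> (v21 \<le> h0 \<and> v23 \<le> h2) \<or> c2 \<le> h1 \<or>
     (v31 \<le> h0 \<and> v32 \<le> h1) \<or> c3 \<le> h2"

lemma dom6_mono:
  assumes "dom6 c1 c2 c3 v12 v13 v21 v23 v31 v32 h0 h1 h2" "h0 \<le> k0" "h1 \<le> k1" "h2 \<le> k2"
  shows "dom6 c1 c2 c3 v12 v13 v21 v23 v31 v32 k0 k1 k2"
  using assms unfolding dom6_def by (elim disjE; simp)

lemma ideal_gen_base: "g \<in> G \<Longrightarrow> g \<in> ideal_gen G"
  unfolding ideal_gen_def by (rule CollectI, rule exI[of _ "{g}"], rule exI[of _ "\<lambda>_. 1"]) simp

lemma monom_mon3: "monom K 3 h = Poly_Mapping.single (mon3 h) 1"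
  by (simp add: monom_def mon3_def)

lemma keys_binom:
  fixes K :: "'k::field itself"
  assumes "m \<in> Poly_Mapping.keys (binom K 3 u)"
  shows "m = mon3 (pos_part u) \<or> m = mon3 (neg_part u)"
proof (rule ccontr)
  assume "\<not> ?thesis"
  then have "Poly_Mapping.lookup (binom K 3 u) m = 0"
    by (auto simp add: binom_def monom_mon3 lookup_minus lookup_single when_def)
  then show False using assms by (simp add: in_keys_iff)
qed

lemma lk_vec3:
  "Poly_Mapping.lookup (mon3 (pos_part (vec3 x y w))) 0 = nat x"
  "Poly_Mapping.lookup (mon3 (pos_part (vec3 x y w))) 1 = nat y"
  "Poly_Mapping.lookup (mon3 (pos_part (vec3 x y w))) 2 = nat w"
  "Poly_Mapping.lookup (mon3 (neg_part (vec3 x y w))) 0 = nat (-x)"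
  "Poly_Mapping.lookup (mon3 (neg_part (vec3 x y w))) 1 = nat (-y)"
  "Poly_Mapping.lookup (mon3 (neg_part (vec3 x y w))) 2 = nat (-w)"
  by (simp_all add: lookup_mon3 pos_part_def neg_part_def vec3_def)

lemma markovF:
  fixes K :: "'k::field itself"
  assumes mb: "markov_basis K a 3 {vec3 (-c1) v12 v13, vec3 v21 (-c2) v23, vec3 v31 v32 (-c3)}"
    and pos: "0 < c1" "0 < c2" "0 < c3" "0 < v12" "0 < v13" "0 < v21" "0 < v23" "0 < v31" "0 < v32"
    and z: "z \<in> kerA a 3" and nz: "z \<noteq> (\<lambda>_. 0)"
  shows "dom6 c1 c2 c3 v12 v13 v21 v23 v31 v32 (max 0 (z 0)) (max 0 (z 1)) (max 0 (z 2))
       \<and> dom6 c1 c2 c3 v12 v13 v21 v23 v31 v32 (max 0 (- z 0)) (max 0 (- z 1)) (max 0 (- z 2))"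
proof -
  let ?M = "{vec3 (-c1) v12 v13, vec3 v21 (-c2) v23, vec3 v31 v32 (-c3)}"
  define D where "D (m::nat \<Rightarrow>\<^sub>0 nat) \<longleftrightarrow> dom6 c1 c2 c3 v12 v13 v21 v23 v31 v32
     (int (Poly_Mapping.lookup m 0)) (int (Poly_Mapping.lookup m 1)) (int (Poly_Mapping.lookup m 2))" for m
  have up: "D (m + m')" if "D m" for m m'
    using that unfolding D_def lookup_add by (rule dom6_mono) auto
  have G: "D m" if "g \<in> binom K 3 ` ?M" "m \<in> Poly_Mapping.keys g" for g m
  proof -
    have "\<exists>u\<in>?M. g = binom K 3 u" using that(1) by (simp only: image_iff)
    then obtain u where u: "u \<in> ?M" "g = binom K 3 u" by (rule bexE)
    then have "m = mon3 (pos_part u) \<or> m = mon3 (neg_part u)" using that(2) keys_binom[of m K u] by simp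
    moreover have "u = vec3 (-c1) v12 v13 \<or> u = vec3 v21 (-c2) v23 \<or> u = vec3 v31 v32 (-c3)" using u(1) by simp
      ultimately show ?thesis using pos
      by (elim disjE; simp only: D_def lk_vec3; simp add: dom6_def)
  qed
  have zin: "binom K 3 z \<in> ideal_gen (binom K 3 ` ?M)"
  proof -
    have "binom K 3 z \<in> toric_ideal K a 3" unfolding toric_ideal_def
      by (rule ideal_gen_base) (use z in blast)
    then show ?thesis using mb unfolding markov_basis_def by simp
  qed
  have z3: "z i = 0" if "i \<ge> 3" for i using z that by (simp add: kerA_def)
  obtain i where i: "i < 3" "z i \<noteq> 0"
  proof -
    from nz obtain i where "z i \<noteq> 0" by auto
    then show ?thesis using that z3 by (metis not_le)
  qed
  have ne: "mon3 (pos_part z) \<noteq> mon3 (neg_part z)"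
  proof
    assume "mon3 (pos_part z) = mon3 (neg_part z)"
    then have "Poly_Mapping.lookup (mon3 (pos_part z)) i = Poly_Mapping.lookup (mon3 (neg_part z)) i" by simp
    then show False using i by (simp add: lookup_mon3 pos_part_def neg_part_def)
  qed
  have k1: "mon3 (pos_part z) \<in> Poly_Mapping.keys (binom K 3 z)"
    using ne by (simp add: binom_def monom_mon3 in_keys_iff lookup_minus lookup_single when_def)
  have k2: "mon3 (neg_part z) \<in> Poly_Mapping.keys (binom K 3 z)"
    using ne by (simp add: binom_def monom_mon3 in_keys_iff lookup_minus lookup_single when_def)
  have "D (mon3 (pos_part z))" by (rule keys_ideal_gen[where D=D, OF up G zin k1])
  moreover have "D (mon3 (neg_part z))" by (rule keys_ideal_gen[where D=D, OF up G zin k2])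
  ultimately show ?thesis
    by (simp add: D_def lookup_mon3 pos_part_def neg_part_def max_def)
qed



definition RDf :: "int \<Rightarrow> int \<Rightarrow> int \<Rightarrow> int \<Rightarrow> int \<Rightarrow> int \<Rightarrow> bool" where
  "RDf u0 u1 u2 z0 z1 z2 \<longleftrightarrow>
    (\<exists>e\<in>{1,-1::int}. 0 \<le> max 0 z0 + e*u0 \<and> 0 \<le> max 0 z1 + e*u1 \<and> 0 \<le> max 0 z2 + e*u2 \<and>
       \<bar>max 0 z0 + e*u0 - max 0 (-z0)\<bar> + \<bar>max 0 z1 + e*u1 - max 0 (-z1)\<bar> + \<bar>max 0 z2 + e*u2 - max 0 (-z2)\<bar>
         < \<bar>z0\<bar> + \<bar>z1\<bar> + \<bar>z2\<bar>) \<or>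
    (\<exists>e\<in>{1,-1::int}. 0 \<le> max 0 (-z0) + e*u0 \<and> 0 \<le> max 0 (-z1) + e*u1 \<and> 0 \<le> max 0 (-z2) + e*u2 \<and>
       \<bar>max 0 (-z0) + e*u0 - max 0 z0\<bar> + \<bar>max 0 (-z1) + e*u1 - max 0 z1\<bar> + \<bar>max 0 (-z2) + e*u2 - max 0 z2\<bar>
         < \<bar>z0\<bar> + \<bar>z1\<bar> + \<bar>z2\<bar>)"

lemma sum3: "(\<Sum>i<(3::nat). f i) = f 0 + f 1 + (f 2 :: int)"
  by (simp add: eval_nat_numeral)

lemma all3: "(\<forall>i<3. P i) \<longleftrightarrow> P 0 \<and> P 1 \<and> P (2::nat)"
  by (auto simp: eval_nat_numeral less_Suc_eq)

lemma int_nat_max: "int (nat x) = max 0 x"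
  by simp

lemma RD_iff: "reduces_dist 3 u z \<longleftrightarrow> RDf (u 0) (u 1) (u 2) (z 0) (z 1) (z 2)"
  unfolding reduces_dist_def RDf_def pos_part_def neg_part_def norm1_def sum3 all3 int_nat_max
  by auto

lemma RDf_neg: "RDf u0 u1 u2 (-z0) (-z1) (-z2) \<longleftrightarrow> RDf u0 u1 u2 z0 z1 z2"
  unfolding RDf_def by auto

lemma caseA:
  assumes "0 < z0" "z1 \<le> 0" "z2 \<le> 0" "c1 \<le> z0" "v12 + v13 < c1" "0 < v12" "0 < v13"
  shows "RDf (-c1) v12 v13 z0 z1 z2"
  unfolding RDf_def
  apply (rule disjI1, rule bexI[of _ 1])
  using assms by (auto simp: max_def abs_if)

lemma caseB:
  assumes s: "z0 \<le> 0" "0 < z1" "z2 \<le> 0" "c2 \<le> z1"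
    and F: "dom6 c1 c2 c3 v12 v13 v21 v23 v31 v32 (max 0 (-z0)) (max 0 (-z1)) (max 0 (-z2))"
    and H: "c1 = v21 + v31" "c2 = v12 + v32" "c3 = v13 + v23" "v23 < c2"
    and p: "0 < v12" "0 < v13" "0 < v21" "0 < v23" "0 < v31" "0 < v32"
    and c: "v21 < c2 + v23 \<or> v31 < v32 + c3"
  shows "RDf (-c1) v12 v13 z0 z1 z2 \<or> RDf v21 (-c2) v23 z0 z1 z2 \<or> RDf v31 v32 (-c3) z0 z1 z2"
proof -
  have F': "c1 \<le> -z0 \<or> (v21 \<le> -z0 \<and> v23 \<le> -z2) \<or> c3 \<le> -z2"
    using F s p H unfolding dom6_def by (auto simp: max_def)
  show ?thesis
  proof (cases "v21 \<le> -z0")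
    case True
    have "RDf v21 (-c2) v23 z0 z1 z2" unfolding RDf_def
      apply (rule disjI1, rule bexI[of _ 1])
      using True s H p by (auto simp: max_def abs_if)
    then show ?thesis by simp
  next
    case False
    then have w: "c3 \<le> -z2" using F' H p by auto
    show ?thesis
    proof (cases "v21 < c2 + v23")
      case True
      have "RDf v21 (-c2) v23 z0 z1 z2" unfolding RDf_def
        apply (rule disjI1, rule bexI[of _ 1])
        using True False w s H p by (auto simp: max_def abs_if)
      then show ?thesis by simp
    next
      case c2: False
      have "RDf v31 v32 (-c3) z0 z1 z2" unfolding RDf_def
        apply (rule disjI2, rule bexI[of _ 1])
        using c2 c False w s H p by (auto simp: max_def abs_if)
      then show ?thesis by simp
    qed
  qed
qed

lemma caseC:
  assumes s: "z0 \<le> 0" "z1 \<le> 0" "0 < z2" "c3 \<le> z2"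
    and F: "dom6 c1 c2 c3 v12 v13 v21 v23 v31 v32 (max 0 (-z0)) (max 0 (-z1)) (max 0 (-z2))"
    and H: "c1 = v21 + v31" "c2 = v12 + v32" "c3 = v13 + v23" "v12 + v13 < c1"
    and p: "0 < v12" "0 < v13" "0 < v21" "0 < v23" "0 < v31" "0 < v32"
    and c: "v21 < c2 + v23 \<or> v31 < v32 + c3"
  shows "RDf (-c1) v12 v13 z0 z1 z2 \<or> RDf v21 (-c2) v23 z0 z1 z2 \<or> RDf v31 v32 (-c3) z0 z1 z2"
proof -
  have F': "c1 \<le> -z0 \<or> c2 \<le> -z1 \<or> (v31 \<le> -z0 \<and> v32 \<le> -z1)"
    using F s p H unfolding dom6_def by (auto simp: max_def)
  show ?thesis
  proof (cases "v31 \<le> -z0")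
    case True
    show ?thesis
    proof (cases "v32 \<le> -z1")
      case True2: True
      have "RDf v31 v32 (-c3) z0 z1 z2" unfolding RDf_def
        apply (rule disjI1, rule bexI[of _ 1])
        using True True2 s H p by (auto simp: max_def abs_if)
      then show ?thesis by simp
    next
      case False2: False
      then have x: "c1 \<le> -z0" using F' H p by auto
      have "RDf (-c1) v12 v13 z0 z1 z2" unfolding RDf_def
        apply (rule disjI2, rule bexI[of _ 1])
        using x False2 s H p by (auto simp: max_def abs_if)
      then show ?thesis by simp
    qed
  next
    case False
    then have y: "c2 \<le> -z1" using F' H p by auto
    show ?thesis
    proof (cases "v31 < v32 + c3")
      case True
      have "RDf v31 v32 (-c3) z0 z1 z2" unfolding RDf_def
        apply (rule disjI1, rule bexI[of _ 1])
        using True False y s H p by (auto simp: max_def abs_if)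
      then show ?thesis by simp
    next
      case c2: False
      have "RDf v21 (-c2) v23 z0 z1 z2" unfolding RDf_def
        apply (rule disjI2, rule bexI[of _ 1])
        using c2 c False y s H p by (auto simp: max_def abs_if)
      then show ?thesis by simp
    qed
  qed
qed



lemma herzog:
  fixes a1 a2 a3 c1 c2 c3 v12 v13 v21 v23 v31 v32 :: int
  assumes a: "0 < a1" "a1 < a2" "a2 < a3"
    and p: "0 < v12" "0 < v13" "0 < v21" "0 < v23" "0 < v31" "0 < v32"
    and E1: "c1 * a1 = v12 * a2 + v13 * a3"
    and E2: "c2 * a2 = v21 * a1 + v23 * a3"
    and E3: "c3 * a3 = v31 * a1 + v32 * a2"
    and M1: "\<And>x y w. 0 \<le> y \<Longrightarrow> 0 \<le> w \<Longrightarrow> 0 < y + w \<Longrightarrow> x * a1 = y * a2 + w * a3 \<Longrightarrow> c1 \<le> x"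
    and M2: "\<And>x y w. 0 \<le> y \<Longrightarrow> 0 \<le> w \<Longrightarrow> 0 < y + w \<Longrightarrow> x * a2 = y * a1 + w * a3 \<Longrightarrow> c2 \<le> x"
    and M3: "\<And>x y w. 0 \<le> y \<Longrightarrow> 0 \<le> w \<Longrightarrow> 0 < y + w \<Longrightarrow> x * a3 = y * a1 + w * a2 \<Longrightarrow> c3 \<le> x"
  shows "c1 = v21 + v31 \<and> c2 = v12 + v32 \<and> c3 = v13 + v23 \<and> v12 + v13 < c1 \<and> v23 < c2"
proof -
  have l1: "v32 < c2"
  proof (rule ccontr)
    assume "\<not> ?thesis"
    then have "c3 \<le> c3 - v23"
      by (intro M3[of "v31+v21" "v32-c2"]) (use p E2 E3 in \<open>auto simp: algebra_simps\<close>)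
    then show False using p by simp
  qed
  have l2: "v23 < c3"
  proof (rule ccontr)
    assume "\<not> ?thesis"
    then have "c2 \<le> c2 - v32"
      by (intro M2[of "v21+v31" "v23-c3"]) (use p E2 E3 in \<open>auto simp: algebra_simps\<close>)
    then show False using p by simp
  qed
  have l3: "v31 < c1"
  proof (rule ccontr)
    assume "\<not> ?thesis"
    then have "c3 \<le> c3 - v13"
      by (intro M3[of "v31-c1" "v12+v32"]) (use p E1 E3 in \<open>auto simp: algebra_simps\<close>)
    then show False using p by simp
  qed
  have l4: "v13 < c3"
  proof (rule ccontr)
    assume "\<not> ?thesis"
    then have "c1 \<le> c1 - v31"
      by (intro M1[of "v12+v32" "v13-c3"]) (use p E1 E3 in \<open>auto simp: algebra_simps\<close>)
    then show False using p by simp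
  qed
  have l5: "v21 < c1"
  proof (rule ccontr)
    assume "\<not> ?thesis"
    then have "c2 \<le> c2 - v12"
      by (intro M2[of "v21-c1" "v13+v23"]) (use p E1 E2 in \<open>auto simp: algebra_simps\<close>)
    then show False using p by simp
  qed
  have l6: "v12 < c2"
  proof (rule ccontr)
    assume "\<not> ?thesis"
    then have "c1 \<le> c1 - v21"
      by (intro M1[of "v12-c2" "v13+v23"]) (use p E1 E2 in \<open>auto simp: algebra_simps\<close>)
    then show False using p by simp
  qed
  have k1: "c1 \<le> v21 + v31"
    by (intro M1[of "c2-v32" "c3-v23"]) (use p l1 l2 E2 E3 in \<open>auto simp: algebra_simps\<close>)
  have k2: "c2 \<le> v12 + v32"
    by (intro M2[of "c1-v31" "c3-v13"]) (use p l3 l4 E1 E3 in \<open>auto simp: algebra_simps\<close>)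
  have k3: "c3 \<le> v13 + v23"
    by (intro M3[of "c1-v21" "c2-v12"]) (use p l5 l6 E1 E2 in \<open>auto simp: algebra_simps\<close>)
  have sum: "(v21 + v31 - c1) * a1 + (v12 + v32 - c2) * a2 + (v13 + v23 - c3) * a3 = 0"
    using E1 E2 E3 by (simp add: algebra_simps)
  have n1: "0 \<le> (v21 + v31 - c1) * a1" using k1 a by simp
  have n2: "0 \<le> (v12 + v32 - c2) * a2" using k2 a by simp
  have n3: "0 \<le> (v13 + v23 - c3) * a3" using k3 a by simp
  have "(v21 + v31 - c1) * a1 = 0" "(v12 + v32 - c2) * a2 = 0" "(v13 + v23 - c3) * a3 = 0"
    using sum n1 n2 n3 by linarith+
  then have e: "c1 = v21 + v31" "c2 = v12 + v32" "c3 = v13 + v23" using a by auto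
  have "v12 * a1 < v12 * a2" "v13 * a1 < v13 * a3" using a p by simp_all
  then have "(v12 + v13) * a1 < c1 * a1" using E1 by (simp add: algebra_simps)
  then have o1: "v12 + v13 < c1" using a by (simp add: mult_less_cancel_right)
  have "v23 * a3 < c2 * a2" using E2 p a by (smt (verit) mult_pos_pos)
  also have "c2 * a2 < c2 * a3" using a e p by simp
  finally have o2: "v23 < c2" using a by (simp add: mult_less_cancel_right)
  show ?thesis using e o1 o2 by simp
qed



lemma core1:
  fixes z0 z1 z2 :: int
  assumes pat: "(0 < z0 \<and> z1 \<le> 0 \<and> z2 \<le> 0) \<or> (z0 \<le> 0 \<and> 0 < z1 \<and> z2 \<le> 0) \<or> (z0 \<le> 0 \<and> z1 \<le> 0 \<and> 0 < z2)"
    and Fp: "dom6 c1 c2 c3 v12 v13 v21 v23 v31 v32 (max 0 z0) (max 0 z1) (max 0 z2)"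
    and Fn: "dom6 c1 c2 c3 v12 v13 v21 v23 v31 v32 (max 0 (-z0)) (max 0 (-z1)) (max 0 (-z2))"
    and H: "c1 = v21 + v31" "c2 = v12 + v32" "c3 = v13 + v23" "v12 + v13 < c1" "v23 < c2"
    and p: "0 < v12" "0 < v13" "0 < v21" "0 < v23" "0 < v31" "0 < v32"
    and c: "v21 < c2 + v23 \<or> v31 < v32 + c3"
  shows "RDf (-c1) v12 v13 z0 z1 z2 \<or> RDf v21 (-c2) v23 z0 z1 z2 \<or> RDf v31 v32 (-c3) z0 z1 z2"
  using pat
proof (elim disjE conjE)
  assume s: "0 < z0" "z1 \<le> 0" "z2 \<le> 0"
  then have "c1 \<le> z0" proof -
    have "max 0 z0 = (if 0 < z0 then z0 else 0)" "max 0 z1 = (if 0 < z1 then z1 else 0)" "max 0 z2 = (if 0 < z2 then z2 else 0)" by auto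
    then show ?thesis using Fp H p s unfolding dom6_def by (simp split: if_splits)
  qed
  then show ?thesis using caseA[of z0 z1 z2 c1 v12 v13] s H p by simp
next
  assume s: "z0 \<le> 0" "0 < z1" "z2 \<le> 0"
  then have "c2 \<le> z1" proof -
    have "max 0 z0 = (if 0 < z0 then z0 else 0)" "max 0 z1 = (if 0 < z1 then z1 else 0)" "max 0 z2 = (if 0 < z2 then z2 else 0)" by auto
    then show ?thesis using Fp H p s unfolding dom6_def by (simp split: if_splits)
  qed
  then show ?thesis using caseB[of z0 z1 z2 c2 c1 c3 v12 v13 v21 v23 v31 v32] s Fn H p c by simp
next
  assume s: "z0 \<le> 0" "z1 \<le> 0" "0 < z2"
  then have "c3 \<le> z2" proof -
    have "max 0 z0 = (if 0 < z0 then z0 else 0)" "max 0 z1 = (if 0 < z1 then z1 else 0)" "max 0 z2 = (if 0 < z2 then z2 else 0)" by auto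
    then show ?thesis using Fp H p s unfolding dom6_def by (simp split: if_splits)
  qed
  then show ?thesis using caseC[of z0 z1 z2 c3 c1 c2 v12 v13 v21 v23 v31 v32] s Fn H p c by simp
qed

lemma core:
  fixes z0 z1 z2 a1 a2 a3 :: int
  assumes a: "0 < a1" "0 < a2" "0 < a3" and k: "a1 * z0 + a2 * z1 + a3 * z2 = 0"
    and nz: "z0 \<noteq> 0 \<or> z1 \<noteq> 0 \<or> z2 \<noteq> 0"
    and Fp: "dom6 c1 c2 c3 v12 v13 v21 v23 v31 v32 (max 0 z0) (max 0 z1) (max 0 z2)"
    and Fn: "dom6 c1 c2 c3 v12 v13 v21 v23 v31 v32 (max 0 (-z0)) (max 0 (-z1)) (max 0 (-z2))"
    and H: "c1 = v21 + v31" "c2 = v12 + v32" "c3 = v13 + v23" "v12 + v13 < c1" "v23 < c2"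
    and p: "0 < v12" "0 < v13" "0 < v21" "0 < v23" "0 < v31" "0 < v32"
    and c: "v21 < c2 + v23 \<or> v31 < v32 + c3"
  shows "RDf (-c1) v12 v13 z0 z1 z2 \<or> RDf v21 (-c2) v23 z0 z1 z2 \<or> RDf v31 v32 (-c3) z0 z1 z2"
proof -
  have s0: "0 < z0 \<longleftrightarrow> 0 < a1 * z0" "z0 < 0 \<longleftrightarrow> a1 * z0 < 0" using a by (simp_all add: zero_less_mult_iff mult_less_0_iff)
  have s1: "0 < z1 \<longleftrightarrow> 0 < a2 * z1" "z1 < 0 \<longleftrightarrow> a2 * z1 < 0" using a by (simp_all add: zero_less_mult_iff mult_less_0_iff)
  have s2: "0 < z2 \<longleftrightarrow> 0 < a3 * z2" "z2 < 0 \<longleftrightarrow> a3 * z2 < 0" using a by (simp_all add: zero_less_mult_iff mult_less_0_iff)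
  have "((0 < z0 \<and> z1 \<le> 0 \<and> z2 \<le> 0) \<or> (z0 \<le> 0 \<and> 0 < z1 \<and> z2 \<le> 0) \<or> (z0 \<le> 0 \<and> z1 \<le> 0 \<and> 0 < z2))
     \<or> ((0 < -z0 \<and> -z1 \<le> 0 \<and> -z2 \<le> 0) \<or> (-z0 \<le> 0 \<and> 0 < -z1 \<and> -z2 \<le> 0) \<or> (-z0 \<le> 0 \<and> -z1 \<le> 0 \<and> 0 < -z2))"
    using s0 s1 s2 k nz by smt
  then show ?thesis
  proof
    assume pat: "(0 < z0 \<and> z1 \<le> 0 \<and> z2 \<le> 0) \<or> (z0 \<le> 0 \<and> 0 < z1 \<and> z2 \<le> 0) \<or> (z0 \<le> 0 \<and> z1 \<le> 0 \<and> 0 < z2)"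
    show ?thesis by (rule core1[OF pat Fp Fn H p c])
  next
    assume pat: "(0 < -z0 \<and> -z1 \<le> 0 \<and> -z2 \<le> 0) \<or> (-z0 \<le> 0 \<and> 0 < -z1 \<and> -z2 \<le> 0) \<or> (-z0 \<le> 0 \<and> -z1 \<le> 0 \<and> 0 < -z2)"
    have Fn': "dom6 c1 c2 c3 v12 v13 v21 v23 v31 v32 (max 0 (- (- z0))) (max 0 (- (- z1))) (max 0 (- (- z2)))"
      using Fp by simp
    have "RDf (-c1) v12 v13 (-z0) (-z1) (-z2) \<or> RDf v21 (-c2) v23 (-z0) (-z1) (-z2) \<or> RDf v31 v32 (-c3) (-z0) (-z1) (-z2)"
      by (rule core1[OF pat Fn Fn' H p c])
    then show ?thesis by (simp add: RDf_neg)
  qed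
qed

lemma not3:
  fixes s t :: int
  assumes "0 < s" "0 < t"
    and p: "0 < c1" "0 < c2" "0 < c3" "0 < v12" "0 < v13" "0 < v21" "0 < v23" "0 < v31" "0 < v32"
    and n: "c2 + v23 \<le> v21" "v32 + c3 \<le> v31"
  shows "\<not> RDf (-c1) v12 v13 0 s (-t)" "\<not> RDf v21 (-c2) v23 0 s (-t)" "\<not> RDf v31 v32 (-c3) 0 s (-t)"
proof -
  have m: "max 0 (0::int) = 0" "max 0 s = s" "max 0 (-s) = 0" "max 0 t = t" "max 0 (-t) = 0" "-(-t) = t"
    using assms by auto
  show "\<not> RDf (-c1) v12 v13 0 s (-t)" unfolding RDf_def m using assms by auto
  show "\<not> RDf v21 (-c2) v23 0 s (-t)" unfolding RDf_def m using assms by auto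
  show "\<not> RDf v31 v32 (-c3) 0 s (-t)" unfolding RDf_def m using assms by auto
qed



lemma vec3_app [simp]: "vec3 x y w 0 = x" "vec3 x y w (Suc 0) = y" "vec3 x y w 1 = y" "vec3 x y w 2 = w"
  by (simp_all add: vec3_def)

lemma kerA_vec3: "vec3 x y w \<in> kerA (vec3 a1 a2 a3) 3 \<longleftrightarrow> a1 * x + a2 * y + a3 * w = 0"
  unfolding kerA_def sum3 by (simp add: vec3_def)

lemma vec3_nz: "x \<noteq> 0 \<or> y \<noteq> 0 \<or> w \<noteq> 0 \<Longrightarrow> vec3 x y w \<noteq> (\<lambda>_. 0)"
  by (metis vec3_app(1,3,4))

theorem theorem3p6:
  fixes K :: "'k::field itself"
    and a1 a2 a3 c1 c2 c3 v12 v13 v21 v23 v31 v32 :: int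
  assumes "0 < a1" and "a1 < a2" and "a2 < a3"
    and "\<not> complete_intersection_row K (vec3 a1 a2 a3) 3"
    and "0 < c1" "0 < c2" "0 < c3"
    and "0 < v12" "0 < v13" "0 < v21" "0 < v23" "0 < v31" "0 < v32"
    and "minimal_markov_basis K (vec3 a1 a2 a3) 3
           {vec3 (-c1) v12 v13, vec3 v21 (-c2) v23, vec3 v31 v32 (-c3)}"
  shows "(distance_reducing (vec3 a1 a2 a3) 3 {vec3 (-c1) v12 v13, vec3 v21 (-c2) v23, vec3 v31 v32 (-c3)}
            \<longleftrightarrow> reduces_dist_set 3 {vec3 (-c1) v12 v13, vec3 v21 (-c2) v23, vec3 v31 v32 (-c3)}
                   {vec3 0 (a3 div gcd a2 a3) (- (a2 div gcd a2 a3))})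
       \<and> (reduces_dist_set 3 {vec3 (-c1) v12 v13, vec3 v21 (-c2) v23, vec3 v31 v32 (-c3)}
                   {vec3 0 (a3 div gcd a2 a3) (- (a2 div gcd a2 a3))}
            \<longleftrightarrow> (v21 < c2 + v23 \<or> v31 < v32 + c3))"
proof -
  note a = assms(1,2,3)
  note pc = assms(5,6,7)
  note p = assms(8-13)
  let ?M = "{vec3 (-c1) v12 v13, vec3 v21 (-c2) v23, vec3 v31 v32 (-c3)}"
  let ?a = "vec3 a1 a2 a3"
  have mb: "markov_basis K ?a 3 ?M" using assms(14) by (simp add: minimal_markov_basis_def)
  have F: "dom6 c1 c2 c3 v12 v13 v21 v23 v31 v32 (max 0 (z 0)) (max 0 (z 1)) (max 0 (z 2))
       \<and> dom6 c1 c2 c3 v12 v13 v21 v23 v31 v32 (max 0 (- z 0)) (max 0 (- z 1)) (max 0 (- z 2))"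
    if "z \<in> kerA ?a 3" "z \<noteq> (\<lambda>_. 0)" for z
    by (rule markovF[OF mb pc p that])
  have sub: "?M \<subseteq> kerA ?a 3" using mb by (simp add: markov_basis_def)
  have E1: "c1 * a1 = v12 * a2 + v13 * a3" using sub kerA_vec3[of "-c1" v12 v13 a1 a2 a3]
    by (simp add: algebra_simps)
  have E2: "c2 * a2 = v21 * a1 + v23 * a3" using sub kerA_vec3[of v21 "-c2" v23 a1 a2 a3]
    by (simp add: algebra_simps)
  have E3: "c3 * a3 = v31 * a1 + v32 * a2" using sub kerA_vec3[of v31 v32 "-c3" a1 a2 a3]
    by (simp add: algebra_simps)
  have M1: "c1 \<le> x" if "0 \<le> y" "0 \<le> w" "0 < y + w" "x * a1 = y * a2 + w * a3" for x y w
  proof -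
    have "vec3 x (-y) (-w) \<in> kerA ?a 3" using that by (simp add: kerA_vec3 algebra_simps)
    moreover have "vec3 x (-y) (-w) \<noteq> (\<lambda>_. 0)" using that by (intro vec3_nz) auto
    ultimately have "dom6 c1 c2 c3 v12 v13 v21 v23 v31 v32 (max 0 x) (max 0 (-y)) (max 0 (-w))"
      using F by fastforce
    then show ?thesis using that p pc unfolding dom6_def by auto
  qed
  have M2: "c2 \<le> x" if "0 \<le> y" "0 \<le> w" "0 < y + w" "x * a2 = y * a1 + w * a3" for x y w
  proof -
    have "vec3 (-y) x (-w) \<in> kerA ?a 3" using that by (simp add: kerA_vec3 algebra_simps)
    moreover have "vec3 (-y) x (-w) \<noteq> (\<lambda>_. 0)" using that by (intro vec3_nz) auto
    ultimately have "dom6 c1 c2 c3 v12 v13 v21 v23 v31 v32 (max 0 (-y)) (max 0 x) (max 0 (-w))"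
      using F by fastforce
    then show ?thesis using that p pc unfolding dom6_def by auto
  qed
  have M3: "c3 \<le> x" if "0 \<le> y" "0 \<le> w" "0 < y + w" "x * a3 = y * a1 + w * a2" for x y w
  proof -
    have "vec3 (-y) (-w) x \<in> kerA ?a 3" using that by (simp add: kerA_vec3 algebra_simps)
    moreover have "vec3 (-y) (-w) x \<noteq> (\<lambda>_. 0)" using that by (intro vec3_nz) auto
    ultimately have "dom6 c1 c2 c3 v12 v13 v21 v23 v31 v32 (max 0 (-y)) (max 0 (-w)) (max 0 x)"
      using F by fastforce
    then show ?thesis using that p pc unfolding dom6_def by auto
  qed
  have Hc: "c1 = v21 + v31 \<and> c2 = v12 + v32 \<and> c3 = v13 + v23 \<and> v12 + v13 < c1 \<and> v23 < c2"
  proof (rule herzog[OF a p E1 E2 E3])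
    show "c1 \<le> x" if "0 \<le> y" "0 \<le> w" "0 < y + w" "x * a1 = y * a2 + w * a3" for x y w
      using M1 that by blast
    show "c2 \<le> x" if "0 \<le> y" "0 \<le> w" "0 < y + w" "x * a2 = y * a1 + w * a3" for x y w
      using M2 that by blast
    show "c3 \<le> x" if "0 \<le> y" "0 \<le> w" "0 < y + w" "x * a3 = y * a1 + w * a2" for x y w
      using M3 that by blast
  qed
  then have H: "c1 = v21 + v31" "c2 = v12 + v32" "c3 = v13 + v23" "v12 + v13 < c1" "v23 < c2"
    by auto
  define g where "g = gcd a2 a3"
  define s where "s = a3 div g"
  define t where "t = a2 div g"
  have gpos: "0 < g" using a unfolding g_def by simp
  have a3s: "a3 = s * g" unfolding s_def g_def by simp
  have a2t: "a2 = t * g" unfolding t_def g_def by simp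
  have spos: "0 < s" using a a3s gpos by (simp add: zero_less_mult_iff) (smt (verit) mult_nonpos_nonneg)
  have tpos: "0 < t" using a a2t gpos by (simp add: zero_less_mult_iff) (smt (verit) mult_nonpos_nonneg)
  have zk: "vec3 0 s (-t) \<in> kerA ?a 3" unfolding kerA_vec3
    by (subst a2t, subst a3s) (simp add: algebra_simps)
  have zn: "vec3 0 s (-t) \<noteq> (\<lambda>_. 0)" using spos by (intro vec3_nz) auto
  have RDset: "reduces_dist_set 3 ?M Z \<longleftrightarrow> (\<forall>z\<in>Z. z \<noteq> (\<lambda>_. 0) \<longrightarrow>
      RDf (-c1) v12 v13 (z 0) (z 1) (z 2) \<or> RDf v21 (-c2) v23 (z 0) (z 1) (z 2) \<or> RDf v31 v32 (-c3) (z 0) (z 1) (z 2))" for Z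
    unfolding reduces_dist_set_def RD_iff by simp
  have i12: "distance_reducing ?a 3 ?M \<Longrightarrow> reduces_dist_set 3 ?M {vec3 0 s (-t)}"
    using zk unfolding distance_reducing_def reduces_dist_set_def by blast
  have i23: "reduces_dist_set 3 ?M {vec3 0 s (-t)} \<Longrightarrow> v21 < c2 + v23 \<or> v31 < v32 + c3"
  proof (rule ccontr)
    assume r: "reduces_dist_set 3 ?M {vec3 0 s (-t)}" and n: "\<not> (v21 < c2 + v23 \<or> v31 < v32 + c3)"
    from r zn have "RDf (-c1) v12 v13 0 s (-t) \<or> RDf v21 (-c2) v23 0 s (-t) \<or> RDf v31 v32 (-c3) 0 s (-t)"
      unfolding RDset by simp
    then show False using not3[OF spos tpos pc p] n by auto
  qed
  have i31: "v21 < c2 + v23 \<or> v31 < v32 + c3 \<Longrightarrow> distance_reducing ?a 3 ?M"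
  proof -
    assume c: "v21 < c2 + v23 \<or> v31 < v32 + c3"
    show ?thesis unfolding distance_reducing_def RDset
    proof (intro ballI impI)
      fix z assume zk: "z \<in> kerA ?a 3" and zn: "z \<noteq> (\<lambda>_. 0)"
      have k: "a1 * z 0 + a2 * z 1 + a3 * z 2 = 0" using zk unfolding kerA_def sum3 by simp
      have z3: "z i = 0" if "i \<ge> 3" for i using zk that by (simp add: kerA_def)
      have nz: "z 0 \<noteq> 0 \<or> z 1 \<noteq> 0 \<or> z 2 \<noteq> 0"
      proof (rule ccontr)
        assume "\<not> ?thesis"
        then have "z i = 0" for i using z3[of i]
          by (cases i; cases "i - 1"; cases "i - 2") (auto simp: numeral_eq_Suc)
        then show False using zn by auto
      qed
      show "RDf (-c1) v12 v13 (z 0) (z 1) (z 2) \<or> RDf v21 (-c2) v23 (z 0) (z 1) (z 2) \<or> RDf v31 v32 (-c3) (z 0) (z 1) (z 2)"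
        using F[OF zk zn] core[OF _ _ _ k nz _ _ H p c] a by auto
    qed
  qed
  show ?thesis unfolding g_def[symmetric] s_def[symmetric] t_def[symmetric]
    using i12 i23 i31 by (metis minus_minus)
qed

end
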